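(* Let $S$ be a supersymmetric numerical semigroup with multiplicity $e$ and blowup $B$. Then ${\rm d}_{\max}(S)=d(F(B)+e;B^{\mathcal D})$.
   Context: $S$ is a numerical semigroup (a submonoid of $\mathbb N$ with finite complement) with minimal generators $e<a_1<\dots<a_t$. An $S$-factorization of $n$ is $(c_0,\dots,c_t)\in\mathbb N^{t+1}$ with $c_0e+\sum c_ia_i=n$, of length $\sum c_i$. ${\rm ord}(n;S)$ is the maximal such length, ${\rm d}_{\max}(n;S)$ is the number of factorizations of maximal length, and ${\rm d}_{\max}(S)=\max_{n\in S}{\rm d}_{\max}(n;S)$. $S$ is additive if ${\rm ord}(u+e;S)={\rm ord}(u;S)+1$ for all $u\in S$. With $\operatorname{Ap}(S;e)=\{w\in S:w-e\notin S\}=\{w_0<w_1<\dots<w_{e-1}\}$, $S$ is supersymmetric if $S$ is additive and, whenever $i+j=e-1$, both $w_i+w_j=w_{e-1}$ and ${\rm ord}(w_i;S)+{\rm ord}(w_j;S)={\rm ord}(w_{e-1};S)$ hold. The blowup is $B=\langle e,d_1,\dots,d_t\rangle$ with $d_i=a_i-e$, and $\mathcal D=(e,d_1,\dots,d_t)$. $d(b;B^{\mathcal D})$ is the number of tuples $(x_0,\dots,x_t)\in\mathbb N^{t+1}$ with $x_0e+\sum x_id_i=b$. $F(B)$ is the largest integer not in $B$. *)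

theory Defs
  imports Main
begin

definition numerical_semigroup :: "nat set \<Rightarrow> bool" where
  "numerical_semigroup S \<longleftrightarrow> 0 \<in> S \<and> (\<forall>x\<in>S. \<forall>y\<in>S. x + y \<in> S) \<and> finite (UNIV - S)"

definition min_gens :: "nat set \<Rightarrow> nat set" where
  "min_gens S = {a \<in> S. a \<noteq> 0 \<and> \<not> (\<exists>x\<in>S. \<exists>y\<in>S. x \<noteq> 0 \<and> y \<noteq> 0 \<and> a = x + y)}"

definition mult :: "nat set \<Rightarrow> nat" where
  "mult S = Min (S - {0})"

definition facts :: "nat set \<Rightarrow> nat \<Rightarrow> (nat \<Rightarrow> nat) set" where
  "facts S n = {c. (\<forall>a. a \<notin> min_gens S \<longrightarrow> c a = 0) \<and> (\<Sum>a\<in>min_gens S. c a * a) = n}"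

definition flen :: "nat set \<Rightarrow> (nat \<Rightarrow> nat) \<Rightarrow> nat" where
  "flen S c = (\<Sum>a\<in>min_gens S. c a)"

definition ord :: "nat \<Rightarrow> nat set \<Rightarrow> nat" where
  "ord n S = Max (flen S ` facts S n)"

definition dmax_at :: "nat \<Rightarrow> nat set \<Rightarrow> nat" where
  "dmax_at n S = card {c \<in> facts S n. flen S c = ord n S}"

definition additive :: "nat set \<Rightarrow> bool" where
  "additive S \<longleftrightarrow> (\<forall>u\<in>S. ord (u + mult S) S = ord u S + 1)"

definition Apery :: "nat set \<Rightarrow> nat \<Rightarrow> nat set" where
  "Apery S e = {w \<in> S. w < e \<or> w - e \<notin> S}"

text \<open>w i = the i-th smallest element of Ap(S;e) (0-indexed).\<close>
definition apw :: "nat set \<Rightarrow> nat \<Rightarrow> nat" where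
  "apw S i = sorted_list_of_set (Apery S (mult S)) ! i"

definition supersymmetric :: "nat set \<Rightarrow> bool" where
  "supersymmetric S \<longleftrightarrow> additive S \<and>
     (\<forall>i j. i + j = mult S - 1 \<longrightarrow>
        apw S i + apw S j = apw S (mult S - 1) \<and>
        ord (apw S i) S + ord (apw S j) S = ord (apw S (mult S - 1)) S)"

text \<open>Blowup data D: the generator e is sent to e, each other minimal generator a_i to d_i = a_i - e.
  Tuples are indexed by the minimal generators of S (so repeated values d_i are counted separately).\<close>
definition blowD :: "nat set \<Rightarrow> nat \<Rightarrow> nat" where
  "blowD S a = (if a = mult S then mult S else a - mult S)"

definition blowup :: "nat set \<Rightarrow> nat set" where
  "blowup S = {b. \<exists>x. (\<forall>a. a \<notin> min_gens S \<longrightarrow> x a = 0) \<and> (\<Sum>a\<in>min_gens S. x a * blowD S a) = b}"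

definition dD :: "nat \<Rightarrow> nat set \<Rightarrow> nat" where
  "dD b S = card {x. (\<forall>a. a \<notin> min_gens S \<longrightarrow> x a = 0) \<and> (\<Sum>a\<in>min_gens S. x a * blowD S a) = b}"

definition frob :: "nat set \<Rightarrow> int" where
  "frob B = (if B = UNIV then -1 else int (Max (UNIV - B)))"

end

theory Submission
  imports Defs
begin

locale nsg = fixes S :: "nat set" assumes ns: "numerical_semigroup S"
begin

lemma S0: "0 \<in> S" using ns unfolding numerical_semigroup_def by blast
lemma Sadd: "x \<in> S \<Longrightarrow> y \<in> S \<Longrightarrow> x + y \<in> S" using ns unfolding numerical_semigroup_def by blast
lemma cofin: "finite (UNIV - S)" using ns unfolding numerical_semigroup_def by blast

lemma bound: "\<exists>N. \<forall>n\<ge>N. n \<in> S"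
proof -
  obtain k where "UNIV - S \<subseteq> {..<k}" using cofin by (auto simp: finite_nat_set_iff_bounded)
  then show ?thesis by (intro exI[of _ k]) auto
qed

lemma Smul: "x \<in> S \<Longrightarrow> k * x \<in> S"
  by (induction k) (auto simp: S0 Sadd)

definition m where "m = (LEAST x. x \<in> S \<and> x \<noteq> 0)"

lemma ex_nz: "\<exists>x. x \<in> S \<and> x \<noteq> 0"
proof -
  obtain N where "\<forall>n\<ge>N. n \<in> S" using bound by blast
  then show ?thesis by (intro exI[of _ "Suc N"]) auto
qed

lemma m_S: "m \<in> S" and m_pos: "m > 0"
  using LeastI_ex[OF ex_nz] unfolding m_def by auto

lemma m_le: "x \<in> S \<Longrightarrow> x \<noteq> 0 \<Longrightarrow> m \<le> x"
  unfolding m_def by (rule Least_le) simp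

lemma G_S: "a \<in> min_gens S \<Longrightarrow> a \<in> S" unfolding min_gens_def by auto
lemma G_ge: "a \<in> min_gens S \<Longrightarrow> m \<le> a" unfolding min_gens_def using m_le by auto
lemma m_G: "m \<in> min_gens S"
proof -
  have "\<not> (\<exists>x\<in>S. \<exists>y\<in>S. x \<noteq> 0 \<and> y \<noteq> 0 \<and> m = x + y)"
  proof
    assume "\<exists>x\<in>S. \<exists>y\<in>S. x \<noteq> 0 \<and> y \<noteq> 0 \<and> m = x + y"
    then obtain x y where "x \<in> S" "y \<in> S" "x \<noteq> 0" "y \<noteq> 0" "m = x + y" by blast
    with m_le[of x] m_le[of y] show False by auto
  qed
  then show ?thesis using m_S m_pos unfolding min_gens_def by auto
qed

lemma G_sub: "a \<in> min_gens S \<Longrightarrow> a \<noteq> m \<Longrightarrow> a - m \<notin> S"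
proof
  assume a: "a \<in> min_gens S" "a \<noteq> m" "a - m \<in> S"
  have "m \<le> a" using G_ge a by auto
  then have "a = m + (a - m)" "a - m \<noteq> 0" using a by auto
  then show False using a m_S m_pos unfolding min_gens_def by blast
qed

lemma finG: "finite (min_gens S)"
proof -
  have "min_gens S \<subseteq> insert m ((\<lambda>x. x + m) ` (UNIV - S))"
  proof
    fix a assume a: "a \<in> min_gens S"
    show "a \<in> insert m ((\<lambda>x. x + m) ` (UNIV - S))"
    proof (cases "a = m")
      case False
      then have "a - m \<notin> S" "m \<le> a" using G_sub G_ge a by auto
      then show ?thesis by (intro insertI2 image_eqI[of _ _ "a - m"]) auto
    qed simp
  qed
  moreover have "finite (insert m ((\<lambda>x. x + m) ` (UNIV - S)))" using cofin by simp
  ultimately show ?thesis by (rule finite_subset)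
qed

lemma facts_ne: "n \<in> S \<Longrightarrow> \<exists>c. c \<in> facts S n"
proof (induction n rule: less_induct)
  case (less n)
  show ?case
  proof (cases "n = 0")
    case True
    then show ?thesis by (intro exI[of _ "\<lambda>_. 0"]) (simp add: facts_def)
  next
    case nz: False
    show ?thesis
    proof (cases "n \<in> min_gens S")
      case True
      have "(\<Sum>a\<in>min_gens S. (if a = n then 1 else 0) * a) = (\<Sum>a\<in>min_gens S. if a = n then n else 0)"
        by (rule sum.cong) auto
      also have "\<dots> = n" using True finG by simp
      finally have "(\<Sum>a\<in>min_gens S. (if a = n then 1 else 0) * a) = n" .
      then show ?thesis using True
        by (intro exI[of _ "\<lambda>a. if a = n then 1 else 0"]) (auto simp: facts_def)
    next
      case False
      then obtain x y where xy: "x \<in> S" "y \<in> S" "x \<noteq> 0" "y \<noteq> 0" "n = x + y"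
        using less.prems nz unfolding min_gens_def by blast
      then obtain cx cy where "cx \<in> facts S x" "cy \<in> facts S y"
        using less.IH[of x] less.IH[of y] by auto
      then show ?thesis using xy
        by (intro exI[of _ "\<lambda>a. cx a + cy a"]) (auto simp: facts_def sum.distrib algebra_simps)
    qed
  qed
qed

lemma facts_S: "c \<in> facts S n \<Longrightarrow> n \<in> S"
proof -
  assume c: "c \<in> facts S n"
  have "\<And>A. A \<subseteq> min_gens S \<Longrightarrow> (\<Sum>a\<in>A. c a * a) \<in> S"
  proof -
    fix A assume "A \<subseteq> min_gens S"
    then show "(\<Sum>a\<in>A. c a * a) \<in> S"
      using finite_subset[OF _ finG]
    proof (induction A rule: infinite_finite_induct)
      case (insert x F) then show ?case using Smul G_S by (simp add: Sadd)
    qed (auto simp: S0)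
  qed
  then show ?thesis using c unfolding facts_def by auto
qed

lemma facts_le: "c \<in> facts S n \<Longrightarrow> c a \<le> n"
proof (cases "a \<in> min_gens S")
  case True
  assume c: "c \<in> facts S n"
  have "c a * a \<le> (\<Sum>a\<in>min_gens S. c a * a)"
    by (rule member_le_sum[OF True]) (auto simp: finG)
  moreover have "a \<ge> 1" using G_ge[OF True] m_pos by auto
  moreover have h1: "c a \<le> c a * a" using \<open>a \<ge> 1\<close> by simp
  ultimately have "c a * a \<le> n" using c unfolding facts_def by simp
  with h1 show ?thesis by (rule le_trans)
next
  case False
  assume "c \<in> facts S n" then show ?thesis using False unfolding facts_def by auto
qed

lemma fin_funs: "finite {c::nat\<Rightarrow>nat. \<forall>a. (a \<in> A \<longrightarrow> c a \<in> B) \<and> (a \<notin> A \<longrightarrow> c a = 0)}"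
  if "finite A" "finite B" for A B
  using finite_set_of_finite_funs[OF that] .

lemma facts_fin: "finite (facts S n)"
proof (rule finite_subset[OF _ fin_funs[OF finG, of "{0..n}"]])
  show "facts S n \<subseteq> {c. \<forall>a. (a \<in> min_gens S \<longrightarrow> c a \<in> {0..n}) \<and> (a \<notin> min_gens S \<longrightarrow> c a = 0)}"
    using facts_le by (auto simp: facts_def)
qed simp

lemma ord_ge: "c \<in> facts S n \<Longrightarrow> flen S c \<le> ord n S"
  unfolding ord_def by (rule Max_ge) (auto simp: facts_fin)

lemma ord_in: "n \<in> S \<Longrightarrow> \<exists>c\<in>facts S n. flen S c = ord n S"
  unfolding ord_def using facts_ne facts_fin
  by (metis (no_types, lifting) Max_in empty_iff finite_imageI image_iff image_is_empty)

lemma flen_bound: "c \<in> facts S n \<Longrightarrow> m * flen S c \<le> n"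
proof -
  assume c: "c \<in> facts S n"
  have "m * flen S c = (\<Sum>a\<in>min_gens S. c a * m)" by (simp add: flen_def sum_distrib_left mult.commute)
  also have "\<dots> \<le> (\<Sum>a\<in>min_gens S. c a * a)" by (rule sum_mono) (simp add: G_ge)
  finally show ?thesis using c by (simp add: facts_def)
qed

lemma ord_le: "n \<in> S \<Longrightarrow> m * ord n S \<le> n"
  using ord_in flen_bound by fastforce


lemma sum_split: "(\<Sum>a\<in>min_gens S. g a) = g m + (\<Sum>a\<in>min_gens S - {m}. g a)"
  using sum.remove[OF finG m_G] .

lemma sum_upd: "(\<Sum>a\<in>min_gens S - {m}. h ((x(m:=v)) a) a) = (\<Sum>a\<in>min_gens S - {m}. h (x a) a)"
  by (rule sum.cong) auto

lemma flen0: "c \<in> facts S 0 \<Longrightarrow> flen S c = 0"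
  using flen_bound[of c 0] m_pos by simp

lemma ord0: "ord 0 S = 0"
  using ord_in[OF S0] flen0 by force

lemma ord_mj: "ord (m * j) S = j"
proof -
  let ?c = "\<lambda>a. if a = m then j else 0"
  have s1: "(\<Sum>a\<in>min_gens S. ?c a * a) = m * j"
    using sum_split[of "\<lambda>a. ?c a * a"] by simp
  have s2: "flen S ?c = j" unfolding flen_def using sum_split[of ?c] by simp
  have "?c \<in> facts S (m * j)" using s1 m_G by (auto simp: facts_def)
  then have "j \<le> ord (m * j) S" using ord_ge s2 by force
  moreover have "m * ord (m * j) S \<le> m * j" using ord_le Smul[OF m_S, of j] by (simp add: mult.commute)
  then have "ord (m * j) S \<le> j" using m_pos by simp
  ultimately show ?thesis by simp
qed

lemma facts_empty: "n \<notin> S \<Longrightarrow> facts S n = {}"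
  using facts_S by blast

lemma mult_eq_aux:
  assumes add: "additive S"
  shows "mult S = m"
proof -
  define c where "c = mult S"
  have A: "\<And>u. u \<in> S \<Longrightarrow> ord (u + c) S = ord u S + 1" using add unfolding additive_def c_def by blast
  have oc: "ord c S = 1" using A[OF S0] ord0 by simp
  have step: "m + k * c \<in> S \<and> ord (m + k * c) S = k + 1" for k
  proof (induction k)
    case 0
    then show ?case using m_S ord_mj[of 1] by simp
  next
    case (Suc k)
    let ?u = "m + k * c"
    have o: "ord (?u + c) S = k + 2" using A Suc by simp
    have "?u + c \<in> S"
    proof (cases "c \<in> S")
      case True then show ?thesis using Suc Sadd by blast
    next
      case False
      then have "ord c S = Max {}" unfolding ord_def using facts_empty by simp
      show ?thesis
      proof (rule ccontr)
        assume "?u + c \<notin> S"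
        then have "ord (?u + c) S = Max {}" unfolding ord_def using facts_empty by simp
        then show False using o oc \<open>ord c S = Max {}\<close> by simp
      qed
    qed
    then show ?case using o by (simp add: ac_simps)
  qed
  have "ord (m + m * c) S = 1 + c" using ord_mj[of "1 + c"] by (simp add: distrib_left)
  moreover have "ord (m + m * c) S = m + 1" using step[of m] by (simp add: mult.commute)
  ultimately show ?thesis unfolding c_def by simp
qed

end

locale ssg = nsg + assumes add: "additive S" and sup: "supersymmetric S"
begin

lemma mult_eq: "mult S = m" using mult_eq_aux add .

lemma addS: "u \<in> S \<Longrightarrow> ord (u + m) S = ord u S + 1"
  using add mult_eq unfolding additive_def by auto

lemma add_iter: "u \<in> S \<Longrightarrow> u + k * m \<in> S \<and> ord (u + k * m) S = ord u S + k"
proof (induction k)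
  case (Suc k)
  then have "u + k * m \<in> S" by simp
  then have "ord (u + k * m + m) S = ord (u + k * m) S + 1" by (rule addS)
  moreover have "u + k * m + m \<in> S" using \<open>u + k * m \<in> S\<close> m_S Sadd by blast
  ultimately show ?case using Suc by (simp add: ac_simps)
qed simp

lemma blowD_eq: "blowD S a = (if a = m then m else a - m)"
  unfolding blowD_def mult_eq ..

definition r :: "nat \<Rightarrow> nat" where "r n = n - m * ord n S"

lemma r_eq: "n \<in> S \<Longrightarrow> n = r n + m * ord n S"
  unfolding r_def using ord_le by simp

lemma r_shift: "u \<in> S \<Longrightarrow> r (u + k * m) = r u"
  unfolding r_def using add_iter[of u k] ord_le[of u] by (simp add: algebra_simps)

definition Nset :: "nat \<Rightarrow> (nat \<Rightarrow> nat) set" where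
  "Nset y = {x. (\<forall>a. a \<notin> min_gens S - {m} \<longrightarrow> x a = 0) \<and> (\<Sum>a\<in>min_gens S. x a * blowD S a) = y}"

definition Dset :: "nat \<Rightarrow> (nat \<Rightarrow> nat) set" where
  "Dset y = {x. (\<forall>a. a \<notin> min_gens S \<longrightarrow> x a = 0) \<and> (\<Sum>a\<in>min_gens S. x a * blowD S a) = y}"

lemma DEC: "(\<Sum>a\<in>min_gens S. c a * a) = m * (\<Sum>a\<in>min_gens S. c a) + (\<Sum>a\<in>min_gens S. (c(m:=0)) a * blowD S a)"
proof -
  have "(\<Sum>a\<in>min_gens S. c a * a) = (\<Sum>a\<in>min_gens S. m * c a + (c(m:=0)) a * blowD S a)"
  proof (rule sum.cong)
    fix a assume a: "a \<in> min_gens S"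
    then have "m \<le> a" by (rule G_ge)
    then show "c a * a = m * c a + (c(m:=0)) a * blowD S a"
      by (cases "a = m") (auto simp: blowD_eq algebra_simps diff_mult_distrib2)
  qed simp
  then show ?thesis by (simp add: sum.distrib sum_distrib_left)
qed

lemma blowD_pos: "a \<in> min_gens S - {m} \<Longrightarrow> blowD S a \<ge> 1"
  using G_ge[of a] by (auto simp: blowD_eq)

lemma Nset_le: "x \<in> Nset y \<Longrightarrow> x a \<le> y"
proof (cases "a \<in> min_gens S - {m}")
  case True
  assume x: "x \<in> Nset y"
  have "x a * blowD S a \<le> (\<Sum>a\<in>min_gens S. x a * blowD S a)"
    by (rule member_le_sum) (use True finG in auto)
  moreover have "x a \<le> x a * blowD S a" using blowD_pos[OF True] by simp
  ultimately have "x a \<le> (\<Sum>a\<in>min_gens S. x a * blowD S a)" by (rule le_trans[rotated])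
  then show ?thesis using x unfolding Nset_def by auto
next
  case False
  assume "x \<in> Nset y" then show ?thesis using False unfolding Nset_def by auto
qed

lemma Nset_fin: "finite (Nset y)"
proof (rule finite_subset[OF _ fin_funs[of "min_gens S - {m}" "{0..y}"]])
  show "Nset y \<subseteq> {c. \<forall>a. (a \<in> min_gens S - {m} \<longrightarrow> c a \<in> {0..y}) \<and> (a \<notin> min_gens S - {m} \<longrightarrow> c a = 0)}"
  proof
    fix x assume x: "x \<in> Nset y"
    show "x \<in> {c. \<forall>a. (a \<in> min_gens S - {m} \<longrightarrow> c a \<in> {0..y}) \<and> (a \<notin> min_gens S - {m} \<longrightarrow> c a = 0)}"
      using Nset_le[OF x] x unfolding Nset_def by auto
  qed
qed (auto simp: finG)

lemma flen_split: "flen S c = c m + (\<Sum>a\<in>min_gens S - {m}. c a)"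
  unfolding flen_def by (rule sum_split)

lemma L1map: "c \<in> facts S n \<Longrightarrow> flen S c = ord n S \<Longrightarrow> c(m:=0) \<in> Nset (r n)"
proof -
  assume c: "c \<in> facts S n" "flen S c = ord n S"
  have "n = m * ord n S + (\<Sum>a\<in>min_gens S. (c(m:=0)) a * blowD S a)"
    using DEC[of c] c unfolding facts_def flen_def by simp
  then have "(\<Sum>a\<in>min_gens S. (c(m:=0)) a * blowD S a) = r n" unfolding r_def by simp
  moreover have "\<forall>a. a \<notin> min_gens S - {m} \<longrightarrow> (c(m:=0)) a = 0" using c unfolding facts_def by auto
  ultimately show ?thesis unfolding Nset_def by simp
qed

lemma L1: "n \<in> S \<Longrightarrow> dmax_at n S \<le> card (Nset (r n))"
proof -
  assume n: "n \<in> S"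
  let ?A = "{c \<in> facts S n. flen S c = ord n S}"
  have "inj_on (\<lambda>c. c(m:=0)) ?A"
  proof (rule inj_onI)
    fix c1 c2 assume c1: "c1 \<in> ?A" and c2: "c2 \<in> ?A" and eq: "c1(m:=0) = c2(m:=0)"
    have off: "c1 a = c2 a" if "a \<noteq> m" for a using fun_cong[OF eq, of a] that by simp
    have "(\<Sum>a\<in>min_gens S - {m}. c1 a) = (\<Sum>a\<in>min_gens S - {m}. c2 a)"
      by (rule sum.cong) (auto simp: off)
    moreover have "flen S c1 = flen S c2" using c1 c2 by simp
    ultimately have "c1 m = c2 m" using flen_split[of c1] flen_split[of c2] by simp
    then show "c1 = c2" using off by (intro ext) (metis)
  qed
  moreover have "(\<lambda>c. c(m:=0)) ` ?A \<subseteq> Nset (r n)" using L1map by blast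
  ultimately have "card ?A \<le> card (Nset (r n))" using Nset_fin by (intro card_inj_on_le) auto
  then show ?thesis unfolding dmax_at_def .
qed

lemma L2: "n \<in> S \<Longrightarrow> \<exists>k. card (Nset (r n)) \<le> dmax_at (n + k * m) S"
proof -
  assume n: "n \<in> S"
  define k where "k = card (min_gens S) * r n"
  define n' where "n' = n + k * m"
  define L' where "L' = ord n S + k"
  have n'S: "n' \<in> S" and oL: "ord n' S = L'" using add_iter[OF n, of k] unfolding n'_def L'_def by auto
  have rn': "r n' = r n" unfolding n'_def using r_shift[OF n] .
  have mL: "m * L' \<le> n'" using ord_le[OF n'S] oL by simp
  let ?A = "{c \<in> facts S n'. flen S c = ord n' S}"
  define f where "f x = x(m := L' - (\<Sum>a\<in>min_gens S. x a))" for x :: "nat \<Rightarrow> nat"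
  have fx0: "(f x)(m:=0) = x" if "x \<in> Nset (r n)" for x
    using that unfolding f_def Nset_def by (auto intro!: ext)
  have "f x \<in> ?A" if x: "x \<in> Nset (r n)" for x
  proof -
    have xm: "x m = 0" using x unfolding Nset_def by auto
    have "(\<Sum>a\<in>min_gens S. x a) \<le> card (min_gens S) * r n"
      using sum_bounded_above[of "min_gens S" x "r n"] Nset_le[OF x] by simp
    then have le: "(\<Sum>a\<in>min_gens S. x a) \<le> L'" unfolding L'_def k_def by simp
    have fl: "flen S (f x) = L'"
      using flen_split[of "f x"] sum_split[of x] xm le sum_upd[of "\<lambda>v a. v" x]
      unfolding f_def by simp
    have "(\<Sum>a\<in>min_gens S. f x a * a) = m * L' + (\<Sum>a\<in>min_gens S. x a * blowD S a)"
      using DEC[of "f x"] fl fx0[OF x] unfolding flen_def by simp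
    also have "\<dots> = m * L' + r n" using x unfolding Nset_def by simp
    also have "\<dots> = n'" using r_eq[OF n'S] oL rn' by simp
    finally have "f x \<in> facts S n'" using x m_G unfolding facts_def Nset_def f_def by auto
    then show ?thesis using fl oL by simp
  qed
  then have "f ` Nset (r n) \<subseteq> ?A" by blast
  moreover have "inj_on f (Nset (r n))" using fx0 by (metis inj_onI)
  ultimately have "card (Nset (r n)) \<le> card ?A" using facts_fin by (intro card_inj_on_le) auto
  then show ?thesis unfolding dmax_at_def n'_def by blast
qed


lemma Nset_sub_D: "Nset y \<subseteq> Dset y"
  unfolding Nset_def Dset_def by auto

lemma Nset_ne: "n \<in> S \<Longrightarrow> Nset (r n) \<noteq> {}"
  using ord_in L1map by blast

lemma blowDm: "blowD S m = m" by (simp add: blowD_eq)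

lemma sum_blow_upd: "(\<Sum>a\<in>min_gens S. (x(m:=v)) a * blowD S a) = v * m + (\<Sum>a\<in>min_gens S - {m}. x a * blowD S a)"
  using sum_split[of "\<lambda>a. (x(m:=v)) a * blowD S a"] sum_upd[of "\<lambda>u a. u * blowD S a" x v] blowDm by simp

lemma sum_blow: "(\<Sum>a\<in>min_gens S. x a * blowD S a) = x m * m + (\<Sum>a\<in>min_gens S - {m}. x a * blowD S a)"
  using sum_split[of "\<lambda>a. x a * blowD S a"] blowDm by simp

lemma L3: "n \<in> S \<Longrightarrow> m \<le> r n \<Longrightarrow> r n - m \<notin> blowup S"
proof
  assume n: "n \<in> S" and mle: "m \<le> r n" and "r n - m \<in> blowup S"
  then obtain y where ysup: "\<forall>a. a \<notin> min_gens S \<longrightarrow> y a = 0"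
    and ysum: "(\<Sum>a\<in>min_gens S. y a * blowD S a) = r n - m" unfolding blowup_def by blast
  define c where "c = y(m := y m + 1)"
  define q where "q = (\<Sum>a\<in>min_gens S - {m}. y a)"
  define q0 where "q0 = (\<Sum>a\<in>min_gens S - {m}. y a * blowD S a)"
  have ysum2: "y m * m + q0 = r n - m" using ysum sum_blow[of y] unfolding q0_def by simp
  have fl: "flen S c = y m + 1 + q"
    using flen_split[of c] sum_upd[of "\<lambda>u a. u" y "y m + 1"] unfolding c_def q_def by simp
  have "c(m:=0) = y(m:=0)" unfolding c_def by simp
  then have cm0: "(\<Sum>a\<in>min_gens S. (c(m:=0)) a * blowD S a) = q0"
    using sum_blow_upd[of y 0] unfolding q0_def by simp
  define n' where "n' = (\<Sum>a\<in>min_gens S. c a * a)"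
  have "n' = m * flen S c + q0" using DEC[of c] cm0 unfolding flen_def n'_def by simp
  also have "\<dots> = m * y m + m + m * q + q0" using fl by (simp add: algebra_simps)
  also have "\<dots> = r n + m * q" using ysum2 mle by (simp add: algebra_simps)
  finally have n'eq: "n' = r n + m * q" .
  have cf: "c \<in> facts S n'" using ysup m_G unfolding facts_def n'_def c_def by auto
  have n'S: "n' \<in> S" using facts_S[OF cf] .
  have "n + q * m = n' + ord n S * m" using r_eq[OF n] n'eq by (simp add: algebra_simps)
  moreover have "ord (n + q * m) S = ord n S + q" using add_iter[OF n] by blast
  moreover have "ord (n' + ord n S * m) S = ord n' S + ord n S" using add_iter[OF n'S] by blast
  moreover have "flen S c \<le> ord n' S" using ord_ge[OF cf] .
  ultimately show False using fl by simp
qed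

lemma Ap_eq: "Apery S (mult S) = Apery S m" by (simp add: mult_eq)

lemma Ap_S: "w \<in> Apery S m \<Longrightarrow> w \<in> S" unfolding Apery_def by auto

lemma apery_dec: "n \<in> S \<Longrightarrow> \<exists>w\<in>Apery S m. \<exists>k. n = w + k * m"
proof (induction n rule: less_induct)
  case (less n)
  show ?case
  proof (cases "n \<in> Apery S m")
    case True then show ?thesis by (intro bexI[of _ n] exI[of _ 0]) auto
  next
    case False
    then have "m \<le> n" "n - m \<in> S" using less.prems unfolding Apery_def by auto
    moreover have "n - m < n" using m_pos \<open>m \<le> n\<close> by simp
    ultimately obtain w k where "w \<in> Apery S m" "n - m = w + k * m" using less.IH by blast
    then show ?thesis using \<open>m \<le> n\<close> by (intro bexI[of _ w] exI[of _ "Suc k"]) auto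
  qed
qed

lemma mod_inj_aux: "w1 \<in> Apery S m \<Longrightarrow> w2 \<in> Apery S m \<Longrightarrow> w1 < w2 \<Longrightarrow> w1 mod m = w2 mod m \<Longrightarrow> False"
proof -
  assume w1: "w1 \<in> Apery S m" and w2: "w2 \<in> Apery S m" and lt: "w1 < w2" and md: "w1 mod m = w2 mod m"
  have "m dvd w2 - w1" using md lt mod_eq_dvd_iff_nat[of w1 w2 m] by simp
  then obtain k where k: "w2 - w1 = m * k" by blast
  then have "k \<ge> 1" using lt by (cases k) auto
  then have "w2 = w1 + (k - 1) * m + m" using k lt by (cases k) (auto simp: algebra_simps)
  moreover have "w1 + (k - 1) * m \<in> S" using Ap_S[OF w1] Smul[OF m_S] Sadd by blast
  ultimately show False using w2 unfolding Apery_def by auto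
qed

lemma mod_inj: "inj_on (\<lambda>w. w mod m) (Apery S m)"
proof (rule inj_onI)
  fix w1 w2 assume "w1 \<in> Apery S m" "w2 \<in> Apery S m" "w1 mod m = w2 mod m"
  then show "w1 = w2" using mod_inj_aux by (metis linorder_neqE_nat)
qed

lemma big_in: "\<exists>N. \<forall>z. z + N * m \<in> S"
proof -
  obtain N where N: "\<forall>n\<ge>N. n \<in> S" using bound by blast
  have "N \<le> z + N * m" for z using m_pos by (simp add: trans_le_add2)
  then show ?thesis using N by blast
qed

lemma mod_img: "(\<lambda>w. w mod m) ` Apery S m = {..<m}"
proof
  show "(\<lambda>w. w mod m) ` Apery S m \<subseteq> {..<m}" using m_pos by auto
  show "{..<m} \<subseteq> (\<lambda>w. w mod m) ` Apery S m"
  proof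
    fix z assume z: "z \<in> {..<m}"
    obtain N where "\<forall>z. z + N * m \<in> S" using big_in by blast
    then obtain w k where w: "w \<in> Apery S m" "z + N * m = w + k * m" using apery_dec by blast
    then have "w mod m = z mod m" by (metis mod_mult_self1)
    then show "z \<in> (\<lambda>w. w mod m) ` Apery S m" using w z by force
  qed
qed

lemma finA: "finite (Apery S m)"
  using inj_on_finite[OF mod_inj] mod_img by auto

lemma cardA: "card (Apery S m) = m"
  using card_image[OF mod_inj] mod_img by simp

lemma apw_in: "i < m \<Longrightarrow> apw S i \<in> Apery S m"
  unfolding apw_def Ap_eq using finA cardA
  by (metis length_sorted_list_of_set nth_mem set_sorted_list_of_set)

lemma apw_ex: "w \<in> Apery S m \<Longrightarrow> \<exists>i<m. apw S i = w"
  unfolding apw_def Ap_eq using finA cardA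
  by (metis in_set_conv_nth length_sorted_list_of_set set_sorted_list_of_set)

definition W where "W = apw S (m - 1)"
definition M where "M = r W"

lemma W_S: "W \<in> S" unfolding W_def using apw_in Ap_S m_pos by simp

lemma key: "n \<in> S \<Longrightarrow> \<exists>v\<in>S. r n + r v = M"
proof -
  assume n: "n \<in> S"
  obtain w k where w: "w \<in> Apery S m" "n = w + k * m" using apery_dec[OF n] by blast
  have rn: "r n = r w" using r_shift Ap_S[OF w(1)] w(2) by simp
  obtain i where i: "i < m" "apw S i = w" using apw_ex[OF w(1)] by blast
  define j where "j = m - 1 - i"
  have ij: "i + j = mult S - 1" using i mult_eq unfolding j_def by simp
  have sp: "apw S i + apw S j = W" "ord (apw S i) S + ord (apw S j) S = ord W S"
    using sup ij unfolding supersymmetric_def W_def mult_eq by blast+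
  have vS: "apw S j \<in> S" using apw_in[of j] Ap_S j_def m_pos by simp
  have wS: "w \<in> S" using Ap_S[OF w(1)] .
  have oW: "ord W S = ord w S + ord (apw S j) S" using sp(2) i by simp
  have WW: "W = w + apw S j" using sp(1) i by simp
  have "M = (w + apw S j) - m * (ord w S + ord (apw S j) S)" unfolding M_def r_def using oW WW by simp
  then have "r w + r (apw S j) = M"
    using ord_le[OF wS] ord_le[OF vS] unfolding r_def by (simp add: algebra_simps)
  then show ?thesis using rn vS by auto
qed

lemma mono: "Nset z \<noteq> {} \<Longrightarrow> card (Nset y) \<le> card (Nset (y + z))"
proof -
  assume "Nset z \<noteq> {}"
  then obtain t where t: "t \<in> Nset z" by blast
  define f where "f x = (\<lambda>a. x a + t a)" for x :: "nat \<Rightarrow> nat"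
  have "inj_on f (Nset y)" unfolding f_def by (rule inj_onI) (metis add_right_cancel ext)
  moreover have "f ` Nset y \<subseteq> Nset (y + z)"
  proof
    fix u assume "u \<in> f ` Nset y"
    then obtain x where x: "x \<in> Nset y" "u = f x" by blast
    have "(\<Sum>a\<in>min_gens S. u a * blowD S a) = (\<Sum>a\<in>min_gens S. x a * blowD S a) + (\<Sum>a\<in>min_gens S. t a * blowD S a)"
      unfolding x(2) f_def by (simp add: sum.distrib add_mult_distrib)
    then show "u \<in> Nset (y + z)" using x t unfolding Nset_def f_def by auto
  qed
  ultimately show ?thesis using Nset_fin by (intro card_inj_on_le) auto
qed

lemma bound_all: "n \<in> S \<Longrightarrow> dmax_at n S \<le> card (Nset M)"
proof -
  assume n: "n \<in> S"
  obtain v where v: "v \<in> S" "r n + r v = M" using key[OF n] by blast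
  have "dmax_at n S \<le> card (Nset (r n))" using L1[OF n] .
  also have "\<dots> \<le> card (Nset (r n + r v))" using mono Nset_ne[OF v(1)] by blast
  finally show ?thesis using v by simp
qed

lemma attained: "\<exists>n\<in>S. dmax_at n S = card (Nset M)"
proof -
  obtain k where k: "card (Nset (r W)) \<le> dmax_at (W + k * m) S" using L2[OF W_S] by blast
  have nS: "W + k * m \<in> S" using add_iter[OF W_S] by blast
  then show ?thesis using k bound_all[OF nS] unfolding M_def by (intro bexI[of _ "W + k * m"]) auto
qed

lemma r_mod: "n \<in> S \<Longrightarrow> r n mod m = n mod m"
proof -
  assume n: "n \<in> S"
  have "n mod m = (r n + ord n S * m) mod m" using r_eq[OF n] by (simp add: mult.commute)
  then show ?thesis by simp
qed

lemma inB: "x \<in> Nset y \<Longrightarrow> y + j * m \<in> blowup S"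
proof -
  assume x: "x \<in> Nset y"
  have xm: "x m = 0" using x unfolding Nset_def by auto
  have "(\<Sum>a\<in>min_gens S. (x(m:=j)) a * blowD S a) = j * m + (\<Sum>a\<in>min_gens S - {m}. x a * blowD S a)"
    by (rule sum_blow_upd)
  also have "\<dots> = j * m + y" using sum_blow[of x] xm x unfolding Nset_def by simp
  finally have "(\<Sum>a\<in>min_gens S. (x(m:=j)) a * blowD S a) = y + j * m" by simp
  moreover have "\<forall>a. a \<notin> min_gens S \<longrightarrow> (x(m:=j)) a = 0" using x m_G unfolding Nset_def by auto
  ultimately show ?thesis unfolding blowup_def by blast
qed

lemma r_le_M: "n \<in> S \<Longrightarrow> r n \<le> M" using key by fastforce

lemma all_in: "M < z + m \<Longrightarrow> z \<in> blowup S"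
proof -
  assume zM: "M < z + m"
  obtain N where "\<forall>z. z + N * m \<in> S" using big_in by blast
  then have nS: "z + N * m \<in> S" by blast
  define n where "n = z + N * m"
  have nS': "n \<in> S" using nS n_def by simp
  have md: "r n mod m = z mod m" using r_mod[OF nS'] unfolding n_def by simp
  have rle: "r n \<le> M" using r_le_M[OF nS'] .
  have "r n \<le> z"
  proof (rule ccontr)
    assume "\<not> r n \<le> z"
    then have "m dvd r n - z" using md mod_eq_dvd_iff_nat[of z "r n" m] by simp
    moreover have "r n - z > 0" using \<open>\<not> r n \<le> z\<close> by simp
    ultimately have "m \<le> r n - z" by (rule dvd_imp_le)
    then show False using rle zM \<open>\<not> r n \<le> z\<close> by linarith
  qed
  then have "m dvd z - r n" using md mod_eq_dvd_iff_nat[of "r n" z m] by simp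
  then obtain j where j: "z - r n = m * j" by blast
  then have "z = r n + j * m" using \<open>r n \<le> z\<close> by (simp add: algebra_simps)
  moreover obtain x where "x \<in> Nset (r n)" using Nset_ne[OF nS'] by blast
  ultimately show ?thesis using inB by simp
qed

lemma M_ge: "m - 1 \<le> M"
proof -
  obtain N where "\<forall>z. z + N * m \<in> S" using big_in by blast
  define z where "z = m - 1"
  have zm: "z < m" unfolding z_def using m_pos by simp
  define n where "n = z + N * m"
  have nS: "n \<in> S" unfolding n_def using \<open>\<forall>z. z + N * m \<in> S\<close> by blast
  have "(z + N * m) mod m = z" using zm by simp
  then have "r n mod m = z" using r_mod[OF nS] unfolding n_def by simp
  then have "z \<le> r n" by (metis mod_less_eq_dividend)
  then show ?thesis using r_le_M[OF nS] unfolding z_def by simp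
qed

lemma notB: "m \<le> M \<Longrightarrow> M - m \<notin> blowup S"
  using L3[OF W_S] unfolding M_def by simp

lemma b_eq: "nat (frob (blowup S) + int m) = M"
proof (cases "m \<le> M")
  case True
  have in1: "M - m \<in> UNIV - blowup S" using notB[OF True] by simp
  have le: "z \<le> M - m" if "z \<in> UNIV - blowup S" for z
    using all_in[of z] that by (cases "M < z + m") auto
  have fin: "finite (UNIV - blowup S)" using le by (meson finite_atMost finite_subset subsetI atMost_iff)
  have "Max (UNIV - blowup S) = M - m" by (rule Max_eqI[OF fin le in1])
  moreover have "blowup S \<noteq> UNIV" using in1 by auto
  ultimately have "frob (blowup S) = int (M - m)" unfolding frob_def by simp
  then show ?thesis using True by simp
next
  case False
  then have "blowup S = UNIV" using all_in by force
  then have "frob (blowup S) = -1" unfolding frob_def by simp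
  moreover have "M = m - 1" using False M_ge by simp
  ultimately show ?thesis using m_pos by simp
qed

lemma DN: "Dset M = Nset M"
proof
  show "Nset M \<subseteq> Dset M" by (rule Nset_sub_D)
  show "Dset M \<subseteq> Nset M"
  proof
    fix x assume x: "x \<in> Dset M"
    have xm: "x m = 0"
    proof (rule ccontr)
      assume nz: "x m \<noteq> 0"
      have sm: "M = x m * m + (\<Sum>a\<in>min_gens S - {m}. x a * blowD S a)"
        using sum_blow[of x] x unfolding Dset_def by simp
      then have mle: "m \<le> M" using nz by (metis le_add1 le_trans mult_le_mono1 not_less_eq_eq One_nat_def mult_1 less_one not_le)
      have "(\<Sum>a\<in>min_gens S. (x(m := x m - 1)) a * blowD S a) = (x m - 1) * m + (\<Sum>a\<in>min_gens S - {m}. x a * blowD S a)"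
        by (rule sum_blow_upd)
      also have "\<dots> = M - m" using sm nz by (cases "x m") (auto simp: algebra_simps)
      finally have "M - m \<in> blowup S" using x m_G unfolding blowup_def Dset_def
        by (intro CollectI exI[of _ "x(m := x m - 1)"]) auto
      then show False using notB[OF mle] by simp
    qed
    then show "x \<in> Nset M" using x unfolding Dset_def Nset_def by auto
  qed
qed

lemma dD_eq: "dD M S = card (Nset M)"
  using DN unfolding dD_def Dset_def by simp

end

theorem theorem4p12:
  fixes S :: "nat set"
  assumes "numerical_semigroup S" and "supersymmetric S"
  shows "(\<exists>n\<in>S. dmax_at n S = dD (nat (frob (blowup S) + int (mult S))) S)
    \<and> (\<forall>n\<in>S. dmax_at n S \<le> dD (nat (frob (blowup S) + int (mult S))) S)"
proof -
  interpret ssg S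
    using assms by (unfold_locales) (auto simp: supersymmetric_def)
  show ?thesis using attained bound_all b_eq dD_eq mult_eq by simp
qed

end
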